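(* Let $(X,d)$ be a compact metric space and $F:X\to 2^X$ an expansive, upper semicontinuous set-valued map. If $F$ is open, then the shift $\sigma_{rF}:\mathrm{Orb}_r(X)\to\mathrm{Orb}_r(X)$ has the shadowing property (as a single-valued map on the metric space $(\mathrm{Orb}_r(X),\rho)$).
   Context: $X$ has diameter $1$; $2^X$ is the family of nonempty compact subsets of $X$. $F$ is upper semicontinuous if for every $x$ and open $U\supset F(x)$ there is a neighborhood $V$ of $x$ with $F(y)\subset U$ for $y\in V$. $F$ is open if $F(U)=\bigcup_{u\in U}F(u)$ is open for every open $U$. $\mathrm{Orb}_r(X)=\{(x_0,x_1,\dots)\in X^{\mathbb N}: x_{n+1}\in F(x_n)\ \forall n\}$ with metric $\rho((x_n),(y_n))=\sum_{n\ge0}d(x_n,y_n)/2^{n+1}$; $\sigma_{rF}((x_0,x_1,\dots))=(x_1,x_2,\dots)$. $F$ is expansive if there is $\delta>0$ such that for any $(x_n),(y_n)\in\mathrm{Orb}_r(X)$ with $d(x_n,y_n)<\delta$ for all $n$ one has $x_0=y_0$. A single-valued continuous map $g$ on a metric space $(Z,\rho)$ has the shadowing property if for every $\varepsilon>0$ there is $\delta>0$ such that for every sequence $\{z_n\}_{n\ge0}$ with $\rho(g(z_n),z_{n+1})<\delta$ there is $z\in Z$ with $\rho(g^n(z),z_n)<\varepsilon$ for all $n$. *)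

theory Defs
  imports "HOL-Analysis.Analysis"
begin

definition compact_valued_on :: "'a::metric_space set \<Rightarrow> ('a \<Rightarrow> 'a set) \<Rightarrow> bool" where
  "compact_valued_on X F \<longleftrightarrow> (\<forall>x\<in>X. F x \<noteq> {} \<and> compact (F x) \<and> F x \<subseteq> X)"

definition usc_on :: "'a::metric_space set \<Rightarrow> ('a \<Rightarrow> 'a set) \<Rightarrow> bool" where
  "usc_on X F \<longleftrightarrow> (\<forall>x\<in>X. \<forall>U. openin (top_of_set X) U \<and> F x \<subseteq> U \<longrightarrow>
      (\<exists>V. openin (top_of_set X) V \<and> x \<in> V \<and> (\<forall>y\<in>V. F y \<subseteq> U)))"

definition open_map_on :: "'a::metric_space set \<Rightarrow> ('a \<Rightarrow> 'a set) \<Rightarrow> bool" where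
  "open_map_on X F \<longleftrightarrow> (\<forall>U. openin (top_of_set X) U \<longrightarrow> openin (top_of_set X) (\<Union>u\<in>U. F u))"

definition Orb_r :: "'a set \<Rightarrow> ('a \<Rightarrow> 'a set) \<Rightarrow> (nat \<Rightarrow> 'a) set" where
  "Orb_r X F = {x. (\<forall>n. x n \<in> X) \<and> (\<forall>n. x (Suc n) \<in> F (x n))}"

definition rho :: "(nat \<Rightarrow> 'a::metric_space) \<Rightarrow> (nat \<Rightarrow> 'a) \<Rightarrow> real" where
  "rho x y = (\<Sum>n. dist (x n) (y n) / 2 ^ (n + 1))"

definition shift :: "(nat \<Rightarrow> 'a) \<Rightarrow> (nat \<Rightarrow> 'a)" where
  "shift x = (\<lambda>n. x (Suc n))"

definition expansive_on :: "'a::metric_space set \<Rightarrow> ('a \<Rightarrow> 'a set) \<Rightarrow> bool" where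
  "expansive_on X F \<longleftrightarrow> (\<exists>\<delta>>0. \<forall>x\<in>Orb_r X F. \<forall>y\<in>Orb_r X F.
      (\<forall>n. dist (x n) (y n) < \<delta>) \<longrightarrow> x 0 = y 0)"

definition shadowing_on :: "'b set \<Rightarrow> ('b \<Rightarrow> 'b \<Rightarrow> real) \<Rightarrow> ('b \<Rightarrow> 'b) \<Rightarrow> bool" where
  "shadowing_on Z dm g \<longleftrightarrow> (\<forall>\<epsilon>>0. \<exists>\<delta>>0. \<forall>z::nat \<Rightarrow> 'b. (\<forall>n. z n \<in> Z) \<longrightarrow>
      (\<forall>n. dm (g (z n)) (z (Suc n)) < \<delta>) \<longrightarrow>
      (\<exists>w\<in>Z. \<forall>n. dm ((g ^^ n) w) (z n) < \<epsilon>))"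

end

theory Submission
  imports Defs
begin

lemma summable_rho:
  fixes x y :: "nat \<Rightarrow> 'a::metric_space"
  assumes "\<And>m n. dist (x m) (y n) \<le> 1"
  shows "summable (\<lambda>n. dist (x n) (y n) / 2 ^ (n + 1))"
proof (rule summable_comparison_test[OF _ sums_summable[OF power_half_series]])
  show "\<exists>N. \<forall>n\<ge>N. norm (dist (x n) (y n) / 2 ^ (n + 1)) \<le> (1/2::real) ^ Suc n"
    using assms by (auto simp: power_one_over divide_right_mono)
qed

lemma rho_term:
  fixes x y :: "nat \<Rightarrow> 'a::metric_space"
  assumes "\<And>m n. dist (x m) (y n) \<le> 1"
  shows "dist (x j) (y j) / 2 ^ (j + 1) \<le> rho x y"
proof -
  have "(\<Sum>n\<in>{j}. dist (x n) (y n) / 2 ^ (n + 1)) \<le> rho x y"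
    unfolding rho_def by (rule sum_le_suminf[OF summable_rho[OF assms]]) auto
  thus ?thesis by simp
qed

lemma half_sum: "(\<Sum>n<K. (1/2::real) ^ Suc n) = 1 - (1/2)^K"
  by (induction K) (auto simp: field_simps)

lemma rho_small:
  fixes x y :: "nat \<Rightarrow> 'a::metric_space"
  assumes "\<And>m n. dist (x m) (y n) \<le> 1" and "a \<ge> 0"
    and "\<And>n. n < K \<Longrightarrow> dist (x n) (y n) \<le> a"
  shows "rho x y \<le> a + (1/2)^K"
proof -
  let ?f = "\<lambda>n. dist (x n) (y n) / 2 ^ (n + 1)"
  have s: "summable ?f" by (rule summable_rho[OF assms(1)])
  have "rho x y = (\<Sum>n. ?f (n + K)) + (\<Sum>i<K. ?f i)"
    unfolding rho_def by (rule suminf_split_initial_segment[OF s])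
  also have "(\<Sum>i<K. ?f i) \<le> (\<Sum>i<K. a * (1/2) ^ Suc i)"
  proof (rule sum_mono)
    fix i assume "i \<in> {..<K}"
    hence "dist (x i) (y i) \<le> a" using assms(3) by auto
    thus "?f i \<le> a * (1/2) ^ Suc i"
      by (simp add: power_one_over divide_right_mono)
  qed
  also have "\<dots> = a * (1 - (1/2)^K)" by (subst sum_distrib_left[symmetric]) (simp only: half_sum)
  also have "\<dots> \<le> a" using assms(2) by (simp add: mult_left_le)
  also have "(\<Sum>n. ?f (n + K)) \<le> (\<Sum>n. (1/2)^K * (1/2::real) ^ Suc n)"
  proof (rule suminf_le)
    show "summable (\<lambda>n. ?f (n + K))" using s by (rule summable_ignore_initial_segment)
    show "summable (\<lambda>n. (1/2)^K * (1/2::real) ^ Suc n)"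
      by (rule summable_mult[OF sums_summable[OF power_half_series]])
    fix n
    have "?f (n + K) \<le> 1 / 2 ^ (n + K + 1)"
      using assms(1) by (simp add: divide_right_mono)
    also have "\<dots> = (1/2)^K * (1/2::real) ^ Suc n"
      by (simp add: power_add power_one_over)
    finally show "?f (n + K) \<le> (1/2)^K * (1/2::real) ^ Suc n" .
  qed
  also have "\<dots> = (1/2)^K"
    using suminf_mult[OF sums_summable[OF power_half_series], of "(1/2)^K"] sums_unique[OF power_half_series]
    by simp
  finally show ?thesis by simp
qed

lemma seqcomp:
  fixes X :: "'a::metric_space set" and f :: "nat \<Rightarrow> nat \<Rightarrow> 'a"
  assumes "compact X" "\<And>k n. f k n \<in> X"
  shows "\<exists>l r. strict_mono r \<and> (\<forall>n. l n \<in> X) \<and> (\<forall>n. (\<lambda>k. f (r k) n) \<longlonglongrightarrow> l n)"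
proof -
  have "compactin (product_topology (\<lambda>i. euclidean) UNIV) (PiE UNIV (\<lambda>_. X))"
    using assms(1) by (simp add: compactin_PiE)
  hence c: "compact (PiE UNIV (\<lambda>_::nat. X))"
    by (simp add: euclidean_product_topology)
  have "\<forall>k. f k \<in> PiE UNIV (\<lambda>_. X)" using assms(2) by auto
  from seq_compactE[OF compact_imp_seq_compact[OF c] this] obtain l r where l: "l \<in> PiE UNIV (\<lambda>_. X)" "strict_mono r" "(f \<circ> r) \<longlonglongrightarrow> l"
    by blast
  have "(\<lambda>k. f (r k) n) \<longlonglongrightarrow> l n" for n
  proof -
    have "isCont (\<lambda>x::nat\<Rightarrow>'a. x n) l"
      using continuous_on_eq_continuous_at[of UNIV "\<lambda>x::nat\<Rightarrow>'a. x n"] by simp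
    from isCont_tendsto_compose[OF this l(3)] show ?thesis by (simp add: o_def)
  qed
  hence "\<forall>n. (\<lambda>k. f (r k) n) \<longlonglongrightarrow> l n" by blast
  moreover have "\<forall>n. l n \<in> X" using l(1) by auto
  ultimately show ?thesis using l(2) by blast
qed

lemma closed_graph:
  fixes X :: "'a::metric_space set" and F :: "'a \<Rightarrow> 'a set"
  assumes cv: "compact_valued_on X F" and usc: "usc_on X F"
    and a: "a \<in> X" "\<And>k. a' k \<in> X" "a' \<longlonglongrightarrow> a"
    and b: "\<And>k. b' k \<in> F (a' k)" "b' \<longlonglongrightarrow> b"
  shows "b \<in> F a"
proof (rule ccontr)
  assume nb: "b \<notin> F a"
  have Fa: "F a \<noteq> {}" "compact (F a)" "F a \<subseteq> X" using cv a(1) unfolding compact_valued_on_def by auto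
  define r where "r = infdist b (F a)"
  have r: "r > 0" unfolding r_def
    using infdist_pos_not_in_closed[OF compact_imp_closed[OF Fa(2)] Fa(1) nb] .
  define U where "U = X \<inter> {x. infdist x (F a) < r/2}"
  have "open {x. infdist x (F a) < r/2}"
    by (intro open_Collect_less continuous_on_infdist continuous_on_id continuous_on_const)
  hence U: "openin (top_of_set X) U" unfolding U_def
    by (rule openin_open_Int)
  have "F a \<subseteq> U" using Fa r unfolding U_def by auto
  have "\<exists>V. openin (top_of_set X) V \<and> a \<in> V \<and> (\<forall>y\<in>V. F y \<subseteq> U)"
    using spec[OF bspec[OF usc[unfolded usc_on_def] a(1)], of U] U \<open>F a \<subseteq> U\<close> by (rule mp[OF _ conjI])
  then obtain V where V: "openin (top_of_set X) V" "a \<in> V" "\<And>y. y \<in> V \<Longrightarrow> F y \<subseteq> U"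
    by blast
  from V(1,2) obtain e where e: "e > 0" "ball a e \<inter> X \<subseteq> V"
    unfolding openin_contains_ball by blast
  have "eventually (\<lambda>k. dist (a' k) a < e) sequentially"
    using a(3) e(1) by (simp add: tendsto_iff)
  hence ev: "eventually (\<lambda>k. infdist (b' k) (F a) \<le> r/2) sequentially"
  proof eventually_elim
    case (elim k)
    hence "a' k \<in> V" using e a(2) by (auto simp: dist_commute)
    hence "b' k \<in> U" using V(3) b(1) by blast
    thus ?case unfolding U_def by simp
  qed
  have "(\<lambda>k. infdist (b' k) (F a)) \<longlonglongrightarrow> infdist b (F a)"
    by (intro tendsto_intros b(2))
  moreover have "\<exists>N. \<forall>k\<ge>N. infdist (b' k) (F a) \<le> r/2"
    using ev unfolding eventually_sequentially .
  ultimately have "infdist b (F a) \<le> r/2" by (rule LIMSEQ_le_const2)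
  thus False using r unfolding r_def by simp
qed

lemma orb_limit:
  fixes X :: "'a::metric_space set" and F :: "'a \<Rightarrow> 'a set" and v :: "nat \<Rightarrow> nat \<Rightarrow> 'a"
  assumes "compact X" "compact_valued_on X F" "usc_on X F"
    and "\<And>k. v k \<in> Orb_r X F" "\<And>n. (\<lambda>k. v k n) \<longlonglongrightarrow> w n"
  shows "w \<in> Orb_r X F"
proof -
  have w: "w n \<in> X" for n
    using closed_sequentially[OF compact_imp_closed[OF assms(1)], of "\<lambda>k. v k n"] assms(4,5)
    unfolding Orb_r_def by auto
  have "w (Suc n) \<in> F (w n)" for n
    by (rule closed_graph[OF assms(2,3) w, where a'="\<lambda>k. v k n" and b'="\<lambda>k. v k (Suc n)"])
      (use assms(4,5) in \<open>auto simp: Orb_r_def\<close>)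
  thus ?thesis using w unfolding Orb_r_def by auto
qed

lemma orb_seqcomp:
  fixes X :: "'a::metric_space set" and F :: "'a \<Rightarrow> 'a set" and v :: "nat \<Rightarrow> nat \<Rightarrow> 'a"
  assumes "compact X" "compact_valued_on X F" "usc_on X F"
    and "\<And>k. v k \<in> Orb_r X F"
  shows "\<exists>w r. strict_mono r \<and> w \<in> Orb_r X F \<and> (\<forall>n. (\<lambda>k. v (r k) n) \<longlonglongrightarrow> w n)"
proof -
  have vX: "\<And>k n. v k n \<in> X" using assms(4) unfolding Orb_r_def by auto
  from seqcomp[of X v, OF assms(1) vX] obtain l r where lr: "strict_mono r" "\<forall>n. (\<lambda>k. v (r k) n) \<longlonglongrightarrow> l n"
    by blast
  have "l \<in> Orb_r X F"
    by (rule orb_limit[OF assms(1,2,3), of "\<lambda>k. v (r k)"]) (use assms(4) lr in auto)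
  thus ?thesis using lr by blast
qed


lemma unif_exp:
  fixes X :: "'a::metric_space set" and F :: "'a \<Rightarrow> 'a set"
  assumes "compact X" "compact_valued_on X F" "usc_on X F"
    and exp: "\<forall>x\<in>Orb_r X F. \<forall>y\<in>Orb_r X F. (\<forall>n. dist (x n) (y n) < e) \<longrightarrow> x 0 = y 0"
    and "c < e" "\<epsilon> > 0"
  shows "\<exists>N. \<forall>x\<in>Orb_r X F. \<forall>y\<in>Orb_r X F. (\<forall>n\<le>N. dist (x n) (y n) \<le> c) \<longrightarrow> dist (x 0) (y 0) < \<epsilon>"
proof (rule ccontr)
  assume "\<not> ?thesis"
  hence "\<forall>N. \<exists>x y. x\<in>Orb_r X F \<and> y\<in>Orb_r X F \<and> (\<forall>n\<le>N. dist (x n) (y n) \<le> c) \<and> \<epsilon> \<le> dist (x 0) (y 0)"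
    by (auto simp: not_less) blast
  then obtain xs ys where H: "\<And>N. xs N \<in> Orb_r X F" "\<And>N. ys N \<in> Orb_r X F"
     "\<And>N n. n \<le> N \<Longrightarrow> dist (xs N n) (ys N n) \<le> c" "\<And>N. \<epsilon> \<le> dist (xs N 0) (ys N 0)"
    by metis
  obtain xl r1 where 1: "strict_mono r1" "xl \<in> Orb_r X F" "\<forall>n. (\<lambda>k. xs (r1 k) n) \<longlonglongrightarrow> xl n"
    using orb_seqcomp[OF assms(1,2,3), of xs] H(1) by blast
  obtain yl r2 where 2: "strict_mono r2" "yl \<in> Orb_r X F" "\<forall>n. (\<lambda>k. ys (r1 (r2 k)) n) \<longlonglongrightarrow> yl n"
    using orb_seqcomp[OF assms(1,2,3), of "\<lambda>k. ys (r1 k)"] H(2) by blast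
  have x2: "(\<lambda>k. xs (r1 (r2 k)) n) \<longlonglongrightarrow> xl n" for n
    using LIMSEQ_subseq_LIMSEQ[OF spec[OF 1(3), of n] 2(1)] by (simp add: o_def)
  have D: "(\<lambda>k. dist (xs (r1 (r2 k)) n) (ys (r1 (r2 k)) n)) \<longlonglongrightarrow> dist (xl n) (yl n)" for n
    using tendsto_dist[OF x2 spec[OF 2(3), of n]] .
  have rk: "k \<le> r1 (r2 k)" for k
    using seq_suble[OF 1(1), of "r2 k"] seq_suble[OF 2(1), of k] by linarith
  have "dist (xl n) (yl n) \<le> c" for n
  proof (rule LIMSEQ_le_const2[OF D])
    show "\<exists>N. \<forall>k\<ge>N. dist (xs (r1 (r2 k)) n) (ys (r1 (r2 k)) n) \<le> c"
      using H(3) rk by (meson order_trans)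
  qed
  hence "xl 0 = yl 0" using exp 1(2) 2(2) assms(5) by (meson le_less_trans)
  moreover have "\<epsilon> \<le> dist (xl 0) (yl 0)"
    by (rule LIMSEQ_le_const[OF D]) (use H(4) in auto)
  ultimately show False using assms(6) by simp
qed

lemma lift:
  fixes X :: "'a::metric_space set" and F :: "'a \<Rightarrow> 'a set"
  assumes cX: "compact X" and cv: "compact_valued_on X F" and usc: "usc_on X F"
    and om: "open_map_on X F" and eta: "\<eta> > 0"
  shows "\<exists>\<gamma>>0. \<forall>x\<in>X. \<forall>x'\<in>F x. \<forall>y'\<in>X. dist x' y' < \<gamma> \<longrightarrow> (\<exists>y\<in>X. dist x y < \<eta> \<and> y' \<in> F y)"
proof (rule ccontr)
  assume "\<not> ?thesis"
  hence "\<forall>k::nat. \<exists>x x' y'. x\<in>X \<and> x'\<in>F x \<and> y'\<in>X \<and> dist x' y' < 1 / Suc k \<and> \<not>(\<exists>y\<in>X. dist x y < \<eta> \<and> y' \<in> F y)"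
    by (metis of_nat_0_less_iff zero_less_Suc zero_less_divide_1_iff)
  then obtain xs xs' ys' where H: "\<And>k. xs k \<in> X" "\<And>k. xs' k \<in> F (xs k)" "\<And>k. ys' k \<in> X"
    "\<And>k. dist (xs' k) (ys' k) < 1 / Suc k" "\<And>k y. y \<in> X \<Longrightarrow> dist (xs k) y < \<eta> \<Longrightarrow> ys' k \<notin> F y"
    by metis
  have xs'X: "xs' k \<in> X" for k using H(1,2) cv unfolding compact_valued_on_def by blast
  have sc: "seq_compact X" using cX by (rule compact_imp_seq_compact)
  obtain a r1 where 1: "a \<in> X" "strict_mono r1" "(xs \<circ> r1) \<longlonglongrightarrow> a"
    using seq_compactE[OF sc] H(1) by metis
  obtain a' r2 where 2: "a' \<in> X" "strict_mono r2" "((xs' \<circ> r1) \<circ> r2) \<longlonglongrightarrow> a'"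
    using seq_compactE[OF sc, of "xs' \<circ> r1"] xs'X by auto
  define r where "r = r1 \<circ> r2"
  have r: "strict_mono r" unfolding r_def using 1(2) 2(2) by (rule strict_mono_o)
  have xa: "(\<lambda>k. xs (r k)) \<longlonglongrightarrow> a"
    using LIMSEQ_subseq_LIMSEQ[OF 1(3) 2(2)] by (simp add: r_def o_def)
  have xa': "(\<lambda>k. xs' (r k)) \<longlonglongrightarrow> a'" using 2(3) by (simp add: r_def o_def)
  have "a' \<in> F a"
    by (rule closed_graph[OF cv usc 1(1), where a'="\<lambda>k. xs (r k)" and b'="\<lambda>k. xs' (r k)"])
       (use H(1,2) xa xa' in auto)
  define U where "U = X \<inter> ball a (\<eta>/2)"
  have "openin (top_of_set X) U" unfolding U_def by (rule openin_open_Int) simp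
  hence oU: "openin (top_of_set X) (\<Union>u\<in>U. F u)" using om unfolding open_map_on_def by blast
  have "a \<in> U" unfolding U_def using 1(1) eta by auto
  hence "a' \<in> (\<Union>u\<in>U. F u)" using \<open>a' \<in> F a\<close> by blast
  then obtain e where e: "e > 0" "ball a' e \<inter> X \<subseteq> (\<Union>u\<in>U. F u)"
    using oU unfolding openin_contains_ball by blast
  have ev1: "eventually (\<lambda>k. dist (xs' (r k)) a' < e/2) sequentially"
    using xa' e(1) unfolding tendsto_iff by (meson half_gt_zero)
  have ev2: "eventually (\<lambda>k. dist (xs (r k)) a < \<eta>/2) sequentially"
    using xa eta unfolding tendsto_iff by (meson half_gt_zero)
  have ev3: "eventually (\<lambda>k. inverse (real (Suc k)) < e/2) sequentially"
    using order_tendstoD(2)[OF LIMSEQ_inverse_real_of_nat, of "e/2"] e(1) by simp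
  obtain k where k: "dist (xs' (r k)) a' < e/2" "dist (xs (r k)) a < \<eta>/2" "inverse (real (Suc k)) < e/2"
    using eventually_happens[OF eventually_conj[OF ev1 eventually_conj[OF ev2 ev3]]] by auto
  have "k \<le> r k" using r by (rule seq_suble)
  hence "1 / real (Suc (r k)) \<le> inverse (real (Suc k))"
    by (simp add: divide_inverse le_imp_inverse_le)
  hence "dist (ys' (r k)) a' < e"
    using H(4)[of "r k"] k(1) k(3) dist_triangle[of "ys' (r k)" a' "xs' (r k)"]
    by (simp add: dist_commute)
  hence "ys' (r k) \<in> (\<Union>u\<in>U. F u)" using e(2) H(3) by (auto simp: dist_commute)
  then obtain u where u: "u \<in> U" "ys' (r k) \<in> F u" by blast
  have "dist (xs (r k)) u < \<eta>"
    using u(1) k(2) dist_triangle[of "xs (r k)" u a] unfolding U_def by (simp add: dist_commute)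
  moreover have "u \<in> X" using u(1) unfolding U_def by blast
  ultimately show False using H(5) u(2) by blast
qed


lemma orb_shiftk: "x \<in> Orb_r X F \<Longrightarrow> (\<lambda>n. x (k + n)) \<in> Orb_r X F"
  unfolding Orb_r_def by auto

lemma funpow_shift: "(shift ^^ k) w = (\<lambda>n. w (k + n))"
  by (induction k) (auto simp: shift_def)

theorem theorem3p8:
  fixes X :: "'a::metric_space set" and F :: "'a \<Rightarrow> 'a set"
  assumes "compact X" and "X \<noteq> {}" and "diameter X = 1"
    and "compact_valued_on X F"
    and "expansive_on X F"
    and "usc_on X F"
    and "open_map_on X F"
  shows "shadowing_on (Orb_r X F) rho shift"
proof -
  note cX = assms(1) and cv = assms(4) and usc = assms(6) and om = assms(7)
  obtain e where e: "e > 0" and exp: "\<forall>x\<in>Orb_r X F. \<forall>y\<in>Orb_r X F. (\<forall>n. dist (x n) (y n) < e) \<longrightarrow> x 0 = y 0"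
    using assms(5) unfolding expansive_on_def by blast
  define c where "c = e/2"
  define c' where "c' = e/4"
  have cc: "c < e" "c' > 0" "c' + c' = c" using e unfolding c_def c'_def by auto
  have d1: "dist x y \<le> 1" if "x \<in> X" "y \<in> X" for x y
    using diameter_bounded_bound[OF compact_imp_bounded[OF cX] that] assms(3) by simp
  have oX: "x n \<in> X" if "x \<in> Orb_r X F" for x n using that unfolding Orb_r_def by auto
  have oF: "x (Suc n) \<in> F (x n)" if "x \<in> Orb_r X F" for x n using that unfolding Orb_r_def by auto
  show ?thesis unfolding shadowing_on_def
  proof (intro allI impI)
    fix \<epsilon> :: real assume ep: "\<epsilon> > 0"
    obtain \<gamma> where \<gamma>: "\<gamma> > 0" "\<And>x x' y'. x\<in>X \<Longrightarrow> x'\<in>F x \<Longrightarrow> y'\<in>X \<Longrightarrow> dist x' y' < \<gamma> \<Longrightarrow> (\<exists>y\<in>X. dist x y < c' \<and> y' \<in> F y)"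
      using lift[OF cX cv usc om cc(2)] by blast
    obtain N1 where N1: "\<And>x y. x\<in>Orb_r X F \<Longrightarrow> y\<in>Orb_r X F \<Longrightarrow> (\<forall>n\<le>N1. dist (x n) (y n) \<le> c) \<Longrightarrow> dist (x 0) (y 0) < \<gamma>"
      using unif_exp[OF cX cv usc exp cc(1) \<gamma>(1)] by blast
    have ep4: "\<epsilon>/4 > 0" using ep by simp
    obtain N2 where N2: "\<And>x y. x\<in>Orb_r X F \<Longrightarrow> y\<in>Orb_r X F \<Longrightarrow> (\<forall>n\<le>N2. dist (x n) (y n) \<le> c) \<Longrightarrow> dist (x 0) (y 0) < \<epsilon>/4"
      using unif_exp[OF cX cv usc exp cc(1) ep4] by blast
    have "eventually (\<lambda>K. (1/2::real)^K < \<epsilon>/4) sequentially"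
      using order_tendstoD(2)[OF LIMSEQ_realpow_zero[of "1/2::real"] ep4] by simp
    hence "\<exists>K. (1/2::real)^K < \<epsilon>/4" unfolding eventually_sequentially by blast
    then obtain K where K: "(1/2::real)^K < \<epsilon>/4" by blast
    define M where "M = N1 + N2 + K + 1"
    define m0 where "m0 = min c' (\<epsilon>/4)"
    define \<delta>2 where "\<delta>2 = m0 / (M + 1)"
    define \<delta> where "\<delta> = \<delta>2 / 2 ^ (M + 1)"
    have m0: "m0 > 0" "m0 \<le> c'" "m0 \<le> \<epsilon>/4" using cc ep unfolding m0_def by auto
    have d2: "\<delta>2 > 0" unfolding \<delta>2_def using m0 by simp
    have ib: "real i * \<delta>2 \<le> m0" if "i \<le> M + 1" for i
    proof -
      have "real i * \<delta>2 \<le> real (M + 1) * \<delta>2" using that d2 by (intro mult_right_mono) auto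
      also have "\<dots> = m0" unfolding \<delta>2_def by simp
      finally show ?thesis .
    qed
    show "\<exists>\<delta>>0. \<forall>z. (\<forall>n. z n \<in> Orb_r X F) \<longrightarrow> (\<forall>n. rho (shift (z n)) (z (Suc n)) < \<delta>) \<longrightarrow>
             (\<exists>w\<in>Orb_r X F. \<forall>n. rho ((shift ^^ n) w) (z n) < \<epsilon>)"
    proof (intro exI[of _ \<delta>] conjI allI impI)
      show "\<delta> > 0" unfolding \<delta>_def using d2 by simp
      fix z assume zZ: "\<forall>n. z n \<in> Orb_r X F" and pz: "\<forall>n. rho (shift (z n)) (z (Suc n)) < \<delta>"
      have A: "dist (z k (Suc j)) (z (Suc k) j) < \<delta>2" if "j \<le> M" for k j
      proof -
        have "dist (shift (z k) j) (z (Suc k) j) / 2 ^ (j + 1) \<le> rho (shift (z k)) (z (Suc k))"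
          by (rule rho_term) (simp add: shift_def d1 oX zZ)
        moreover have "rho (shift (z k)) (z (Suc k)) < \<delta>" using pz by blast
        ultimately have "dist (shift (z k) j) (z (Suc k) j) / 2 ^ (j + 1) < \<delta>2 / 2 ^ (M + 1)"
          unfolding \<delta>_def by linarith
        hence "dist (z k (Suc j)) (z (Suc k) j) / 2 ^ (j + 1) < \<delta>2 / 2 ^ (M + 1)"
          by (simp only: shift_def)
        hence "dist (z k (Suc j)) (z (Suc k) j) < \<delta>2 / 2 ^ (M + 1) * 2 ^ (j + 1)"
          by (simp add: divide_less_eq)
        also have "\<dots> \<le> \<delta>2 / 2 ^ (M + 1) * 2 ^ (M + 1)"
          using that d2 by (intro mult_left_mono power_increasing) auto
        finally show ?thesis by simp
      qed
      have B: "\<forall>k p. i \<le> p \<longrightarrow> p \<le> M + 1 \<longrightarrow> dist (z k p) (z (k + i) (p - i)) \<le> real i * \<delta>2" for i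
      proof (induction i)
        case 0 then show ?case by simp
      next
        case (Suc i)
        show ?case
        proof (intro allI impI)
          fix k p assume h: "Suc i \<le> p" "p \<le> M + 1"
          then obtain q where q: "p = Suc q" by (cases p) auto
          have "dist (z k p) (z (k + Suc i) (p - Suc i)) \<le> dist (z k p) (z (Suc k) q) + dist (z (Suc k) q) (z (Suc k + i) (q - i))"
            using dist_triangle q by simp
          moreover have "dist (z (Suc k) q) (z (Suc k + i) (q - i)) \<le> real i * \<delta>2"
            using spec[OF spec[OF Suc.IH, of "Suc k"], of q] h q by simp
          moreover have "dist (z k p) (z (Suc k) q) < \<delta>2" using A[of q k] h q by simp
          ultimately have "dist (z k p) (z (k + Suc i) (p - Suc i)) \<le> \<delta>2 + real i * \<delta>2" by linarith
          thus "dist (z k p) (z (k + Suc i) (p - Suc i)) \<le> real (Suc i) * \<delta>2"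
            by (simp add: algebra_simps)
        qed
      qed
      have Bc: "dist (z k p) (z (k + i) (p - i)) \<le> m0" if "i \<le> p" "p \<le> M + 1" for i p k
        using spec[OF spec[OF B[of i], of k], of p] that ib[of i] by linarith
      define Y where "Y = (\<lambda>L j. if j < L then z j 0 else z L (j - L))"
      have bkw: "\<forall>d. d \<le> L \<longrightarrow> (\<exists>v\<in>Orb_r X F. \<forall>j. dist (v j) (Y L (L - d + j)) \<le> c')" for L
      proof
        fix d show "d \<le> L \<longrightarrow> (\<exists>v\<in>Orb_r X F. \<forall>j. dist (v j) (Y L (L - d + j)) \<le> c')"
        proof (induction d)
          case 0
          show ?case using zZ cc by (intro impI bexI[of _ "z L"]) (auto simp: Y_def)
        next
          case (Suc d)
          show ?case
          proof
            assume dL: "Suc d \<le> L"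
            define m where "m = L - Suc d"
            have mL: "m < L" "L - d = Suc m" using dL unfolding m_def by auto
            from Suc.IH dL obtain v where v: "v \<in> Orb_r X F" "\<And>j. dist (v j) (Y L (Suc m + j)) \<le> c'"
              using mL by auto
            have close: "\<forall>n\<le>N1. dist (v n) (shift (z m) n) \<le> c"
            proof (intro allI impI)
              fix n assume n: "n \<le> N1"
              have "dist (Y L (Suc m + n)) (z m (Suc n)) \<le> m0"
              proof (cases "Suc m + n < L")
                case True
                thus ?thesis using Bc[of "Suc n" "Suc n" m] n unfolding Y_def M_def
                  by (simp add: dist_commute)
              next
                case False
                hence "L - m \<le> Suc n" by auto
                hence "dist (z m (Suc n)) (z (m + (L - m)) (Suc n - (L - m))) \<le> m0"
                  using Bc[of "L - m" "Suc n" m] n unfolding M_def by simp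
                moreover have "m + (L - m) = L" "Suc n - (L - m) = Suc m + n - L" using mL False by auto
                ultimately show ?thesis using False unfolding Y_def by (simp add: dist_commute)
              qed
              hence "dist (v n) (z m (Suc n)) \<le> c' + m0"
                using v(2)[of n] dist_triangle[of "v n" "z m (Suc n)" "Y L (Suc m + n)"] by simp
              thus "dist (v n) (shift (z m) n) \<le> c" using m0 cc unfolding shift_def by simp
            qed
            have sZ: "shift (z m) \<in> Orb_r X F" using zZ unfolding shift_def Orb_r_def by auto
            have "dist (v 0) (z m 1) < \<gamma>" using N1[OF v(1) sZ close] by (simp add: shift_def)
            hence "dist (z m 1) (v 0) < \<gamma>" by (simp add: dist_commute)
            moreover have "z m 0 \<in> X" "v 0 \<in> X" using zZ oX v(1) by blast+
            moreover have "z m 1 \<in> F (z m 0)" using oF[of "z m" 0] zZ by simp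
            ultimately obtain u where u: "u \<in> X" "dist (z m 0) u < c'" "v 0 \<in> F u"
              using \<gamma>(2)[of "z m 0" "z m 1" "v 0"] by blast
            define v' where "v' = (\<lambda>j. case j of 0 \<Rightarrow> u | Suc j' \<Rightarrow> v j')"
            have "v' \<in> Orb_r X F"
              unfolding Orb_r_def
            proof (intro CollectI conjI allI)
              fix n show "v' n \<in> X" using u(1) oX[OF v(1)] by (cases n) (auto simp: v'_def)
              show "v' (Suc n) \<in> F (v' n)" using u(3) oF[OF v(1)] by (cases n) (auto simp: v'_def)
            qed
            moreover have "dist (v' j) (Y L (L - Suc d + j)) \<le> c'" for j
            proof (cases j)
              case 0 thus ?thesis using u(2) mL unfolding v'_def Y_def m_def[symmetric]
                by (simp add: dist_commute)
            next
              case (Suc j') thus ?thesis using v(2)[of j'] unfolding v'_def m_def[symmetric] by simp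
            qed
            ultimately show "\<exists>v\<in>Orb_r X F. \<forall>j. dist (v j) (Y L (L - Suc d + j)) \<le> c'" by blast
          qed
        qed
      qed
      have "\<exists>v\<in>Orb_r X F. \<forall>j. dist (v j) (Y L j) \<le> c'" for L using spec[OF bkw[of L], of L] by simp
      then obtain W where W: "\<And>L. W L \<in> Orb_r X F" "\<And>L j. dist (W L j) (Y L j) \<le> c'" by metis
      obtain w r where wr: "strict_mono r" "w \<in> Orb_r X F" "\<forall>n. (\<lambda>k. W (r k) n) \<longlonglongrightarrow> w n"
        using orb_seqcomp[OF cX cv usc, of W] W(1) by blast
      have hw: "dist (w j) (z j 0) \<le> c'" for j
      proof (rule LIMSEQ_le_const2[OF tendsto_dist[OF spec[OF wr(3), of j] tendsto_const]])
        show "\<exists>N. \<forall>k\<ge>N. dist (W (r k) j) (z j 0) \<le> c'"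
        proof (intro exI allI impI)
          fix k assume "Suc j \<le> k"
          hence "j < r k" using seq_suble[OF wr(1), of k] by linarith
          thus "dist (W (r k) j) (z j 0) \<le> c'" using W(2)[of "r k" j] unfolding Y_def by simp
        qed
      qed
      have near: "dist (w (k + j)) (z (k + j) 0) < \<epsilon>/4" for k j
      proof -
        have "(\<lambda>n. w (k + j + n)) \<in> Orb_r X F" using wr(2) by (rule orb_shiftk)
        moreover have "\<forall>n\<le>N2. dist (w (k + j + n)) (z (k + j) n) \<le> c"
        proof (intro allI impI)
          fix n assume n: "n \<le> N2"
          have "dist (z (k + j) n) (z (k + j + n) (n - n)) \<le> m0"
            using Bc[of n n "k + j"] n unfolding M_def by simp
          hence "dist (w (k + j + n)) (z (k + j) n) \<le> c' + m0"
            using hw[of "k + j + n"] dist_triangle[of "w (k + j + n)" "z (k + j) n" "z (k + j + n) 0"]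
            by (simp add: dist_commute)
          thus "dist (w (k + j + n)) (z (k + j) n) \<le> c" using m0 cc by simp
        qed
        ultimately show ?thesis using N2[of "\<lambda>n. w (k + j + n)" "z (k + j)"] zZ by simp
      qed
      show "\<exists>w\<in>Orb_r X F. \<forall>n. rho ((shift ^^ n) w) (z n) < \<epsilon>"
      proof (intro bexI[OF _ wr(2)] allI)
        fix k
        have "rho (\<lambda>n. w (k + n)) (z k) \<le> \<epsilon>/2 + (1/2)^K"
        proof (rule rho_small)
          show "dist (w (k + m)) (z k n) \<le> 1" for m n using d1[OF oX[OF wr(2)] oX[OF spec[OF zZ]]] by blast
          show "0 \<le> \<epsilon>/2" using ep by simp
          fix j assume j: "j < K"
          have "dist (z k j) (z (k + j) (j - j)) \<le> m0" using Bc[of j j k] j unfolding M_def by simp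
          hence "dist (w (k + j)) (z k j) < \<epsilon>/4 + m0"
            using near[of k j] dist_triangle[of "w (k + j)" "z k j" "z (k + j) 0"]
            by (simp add: dist_commute)
          thus "dist (w (k + j)) (z k j) \<le> \<epsilon>/2" using m0 by simp
        qed
        thus "rho ((shift ^^ k) w) (z k) < \<epsilon>" using K ep unfolding funpow_shift by linarith
      qed
    qed
  qed
qed

end
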